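(* Fix $x\in[0,1]$. The evaluation operator $E:\mathcal C^0([0,1])\to\mathbb R$, $E(\eta)=\varphi_\eta(x)$, is differentiable, with derivative $$\frac{\partial\varphi(x)}{\partial\eta}(\Delta\eta)=\left(\frac{\int_0^x\left[\int_0^s\Delta\eta\right]e^{\int_0^s\eta}ds}{\int_0^xe^{\int_0^s\eta}ds}-\frac{\int_0^1\left[\int_0^s\Delta\eta\right]e^{\int_0^s\eta}ds}{\int_0^1e^{\int_0^s\eta}ds}\right)\varphi(x),$$ where $\varphi=\varphi_\eta$. Moreover there exists $\varepsilon_0>0$ such that for all $\varepsilon\in(0,\varepsilon_0)$, if $\|D^2\varphi\|_{\mathcal C^0}<\varepsilon$ then $$\tfrac18\min\{\varphi(x),1-\varphi(x)\}\le\left|\frac{\partial\varphi(x)}{\partial\eta}\right|\le2\min\{\varphi(x),1-\varphi(x)\}.$$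
   Context: For $\eta\in\mathcal C^0([0,1])$, $\varphi_\eta(x)=\dfrac{\int_0^xe^{\int_0^s\eta(t)dt}ds}{\int_0^1e^{\int_0^s\eta(t)dt}ds}$ is the unique orientation-preserving diffeomorphism of $[0,1]$ with nonlinearity $N\varphi_\eta=D^2\varphi_\eta/D\varphi_\eta=\eta$; this identifies $\mathrm{Diff}^2_+([0,1])$ with $\mathcal C^0([0,1])$. $\left|\partial\varphi(x)/\partial\eta\right|$ denotes the operator norm of the derivative as a linear functional on $\mathcal C^0([0,1])$. *)

theory Defs
  imports "HOL-Analysis.Analysis"
begin

text \<open>C^0([0,1]) is represented by functions real => real that are continuous on {0..1};
  only their values on {0..1} matter. The norm is the sup norm on [0,1].\<close>

definition C0 :: "(real \<Rightarrow> real) set" where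
  "C0 = {h. continuous_on {0..1} h}"

definition c0_norm :: "(real \<Rightarrow> real) \<Rightarrow> real" where
  "c0_norm h = (SUP t\<in>{0..1}. \<bar>h t\<bar>)"

definition phi :: "(real \<Rightarrow> real) \<Rightarrow> real \<Rightarrow> real" where
  "phi \<eta> x = integral {0..x} (\<lambda>s. exp (integral {0..s} \<eta>))
              / integral {0..1} (\<lambda>s. exp (integral {0..s} \<eta>))"

definition D2phi :: "(real \<Rightarrow> real) \<Rightarrow> real \<Rightarrow> real" where
  "D2phi \<eta> t = vector_derivative
      (\<lambda>u. vector_derivative (phi \<eta>) (at u within {0..1})) (at t within {0..1})"

definition dphi :: "(real \<Rightarrow> real) \<Rightarrow> real \<Rightarrow> (real \<Rightarrow> real) \<Rightarrow> real" where
  "dphi \<eta> x \<Delta> =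
     (integral {0..x} (\<lambda>s. integral {0..s} \<Delta> * exp (integral {0..s} \<eta>))
        / integral {0..x} (\<lambda>s. exp (integral {0..s} \<eta>))
      - integral {0..1} (\<lambda>s. integral {0..s} \<Delta> * exp (integral {0..s} \<eta>))
        / integral {0..1} (\<lambda>s. exp (integral {0..s} \<eta>))) * phi \<eta> x"

definition c0_bounded_linear :: "((real \<Rightarrow> real) \<Rightarrow> real) \<Rightarrow> bool" where
  "c0_bounded_linear L \<longleftrightarrow>
     (\<forall>h\<in>C0. \<forall>g\<in>C0. L (\<lambda>t. h t + g t) = L h + L g) \<and>
     (\<forall>h\<in>C0. \<forall>c. L (\<lambda>t. c * h t) = c * L h) \<and>
     (\<exists>K. \<forall>h\<in>C0. \<bar>L h\<bar> \<le> K * c0_norm h)"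

definition c0_opnorm :: "((real \<Rightarrow> real) \<Rightarrow> real) \<Rightarrow> real" where
  "c0_opnorm L = (SUP h\<in>{h\<in>C0. c0_norm h \<le> 1}. \<bar>L h\<bar>)"

definition c0_has_derivative ::
    "((real \<Rightarrow> real) \<Rightarrow> real) \<Rightarrow> ((real \<Rightarrow> real) \<Rightarrow> real) \<Rightarrow> (real \<Rightarrow> real) \<Rightarrow> bool" where
  "c0_has_derivative E L \<eta> \<longleftrightarrow> c0_bounded_linear L \<and>
     (\<forall>e>0. \<exists>d>0. \<forall>h\<in>C0. c0_norm h < d \<longrightarrow>
        \<bar>E (\<lambda>t. \<eta> t + h t) - E \<eta> - L h\<bar> \<le> e * c0_norm h)"

end

theory Submission
  imports Defs
begin


lemma exp_taylor2:
  fixes z :: real assumes "\<bar>z\<bar> \<le> 1"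
  shows "\<bar>exp z - 1 - z\<bar> \<le> z^2"
proof -
  have lo: "0 \<le> exp z - 1 - z" using exp_ge_add_one_self[of z] by linarith
  have "exp z \<le> 1 + z + z^2"
  proof (cases "z \<ge> 0")
    case True then show ?thesis using exp_bound[of z] assms by auto
  next
    case False
    define t where "t = -z"
    have t: "0 < t" "t \<le> 1" using False assms t_def by auto
    have "1 + t \<le> exp t" by simp
    have "exp z = 1 / exp t" using t_def by (simp add: exp_minus field_simps)
    also have "\<dots> \<le> 1 / (1 + t)" using t by (intro divide_left_mono) auto
    also have "\<dots> \<le> 1 - t + t^2"
    proof -
      have "1 \<le> (1 - t + t^2) * (1 + t)" using t by (simp add: algebra_simps power2_eq_square power3_eq_cube)
      then show ?thesis using t by (simp add: field_simps)
    qed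
    finally show ?thesis using t_def by simp
  qed
  then show ?thesis using lo by simp
qed

lemma frechet_arith:
  fixes a c B1 B2 r1 r2 N :: real
  assumes "0 \<le> a" "a \<le> c" "0 < c" "0 \<le> N" "N \<le> 1/8"
    "\<bar>B1\<bar> \<le> N * a" "\<bar>B2\<bar> \<le> N * c" "\<bar>r1\<bar> \<le> N^2 * a" "\<bar>r2\<bar> \<le> N^2 * c"
  shows "\<bar>(a + B1 + r1) / (c + B2 + r2) - a / c - (B1 / a - B2 / c) * (a / c)\<bar> \<le> 8 * N^2"
proof -
  define \<alpha> where "\<alpha> = a / c"
  define b1 where "b1 = B1 / c"
  define b2 where "b2 = B2 / c"
  define \<rho>1 where "\<rho>1 = r1 / c"
  define \<rho>2 where "\<rho>2 = r2 / c"
  define d where "d = b2 + \<rho>2"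
  have al: "0 \<le> \<alpha>" "\<alpha> \<le> 1" using assms by (auto simp: \<alpha>_def field_simps)
  have hb1: "\<bar>b1\<bar> \<le> N * \<alpha>" using assms by (simp add: b1_def \<alpha>_def abs_divide field_simps)
  have hb2: "\<bar>b2\<bar> \<le> N" using assms by (simp add: b2_def abs_divide field_simps)
  have hr1: "\<bar>\<rho>1\<bar> \<le> N^2 * \<alpha>" using assms by (simp add: \<rho>1_def \<alpha>_def abs_divide field_simps)
  have hr2: "\<bar>\<rho>2\<bar> \<le> N^2" using assms by (simp add: \<rho>2_def abs_divide field_simps)
  have N2: "N^2 \<le> N / 8" using mult_left_mono[of "N*8" 1 N] assms by (simp add: power2_eq_square algebra_simps)
  have hd: "\<bar>d\<bar> \<le> 2 * N" using hb2 hr2 N2 assms unfolding d_def by linarith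
  have d1: "1 + d \<ge> 3/4" using hd assms by linarith
  have B1a: "(B1 / a - B2 / c) * (a / c) = b1 - \<alpha> * b2"
  proof (cases "a = 0")
    case True then have "B1 = 0" using assms(6) by simp
    then show ?thesis using True by (simp add: b1_def \<alpha>_def)
  next
    case False then show ?thesis using assms by (simp add: b1_def b2_def \<alpha>_def field_simps)
  qed
  have den: "c + B2 + r2 = c * (1 + d)" using assms by (simp add: d_def b2_def \<rho>2_def field_simps)
  have nu: "a + B1 + r1 = c * (\<alpha> + b1 + \<rho>1)" using assms by (simp add: \<alpha>_def b1_def \<rho>1_def field_simps)
  have eq1: "(a + B1 + r1) / (c + B2 + r2) = (\<alpha> + b1 + \<rho>1) / (1 + d)"
    unfolding den nu using assms by simp
  have eq2: "(\<alpha> + b1 + \<rho>1) / (1 + d) - \<alpha> - (b1 - \<alpha> * b2)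
      = (\<rho>1 - \<alpha> * \<rho>2 - b1 * d + \<alpha> * b2 * d) / (1 + d)"
    using d1 by (simp add: field_simps d_def)
  have num: "\<bar>\<rho>1 - \<alpha> * \<rho>2 - b1 * d + \<alpha> * b2 * d\<bar> \<le> 6 * N^2"
  proof -
    have "\<bar>\<alpha> * \<rho>2\<bar> \<le> N^2" using al hr2 by (simp add: abs_mult mult_le_one) (metis abs_ge_zero mult_left_le_one_le order_trans)
    moreover have "\<bar>b1 * d\<bar> \<le> N * (2 * N)"
      using hb1 hd al assms by (simp add: abs_mult) (intro mult_mono, auto intro: order_trans[OF _ mult_left_le[of \<alpha> N]])
    moreover have "\<bar>\<alpha> * b2 * d\<bar> \<le> N * (2 * N)"
      using hb2 hd al assms by (simp add: abs_mult) (intro mult_mono, auto intro: order_trans[OF mult_left_le_one_le])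
    moreover have "\<bar>\<rho>1\<bar> \<le> N^2" using hr1 al by (meson dual_order.trans mult_left_le zero_le_power2)
    ultimately show ?thesis by (simp add: power2_eq_square)
  qed
  have "\<bar>(\<rho>1 - \<alpha> * \<rho>2 - b1 * d + \<alpha> * b2 * d) / (1 + d)\<bar> \<le> 8 * N^2"
  proof -
    have "\<bar>\<rho>1 - \<alpha> * \<rho>2 - b1 * d + \<alpha> * b2 * d\<bar> / (1 + d) \<le> (6 * N^2) / (3/4)"
      by (rule frac_le) (use num d1 in auto)
    moreover have "\<bar>1 + d\<bar> = 1 + d" using d1 by simp
    ultimately have "\<bar>(\<rho>1 - \<alpha> * \<rho>2 - b1 * d + \<alpha> * b2 * d) / (1 + d)\<bar> \<le> (6 * N^2) / (3/4)"
      by (simp add: abs_divide)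
    then show ?thesis by simp
  qed
  moreover have "a / c = \<alpha>" by (simp add: \<alpha>_def)
  ultimately show ?thesis using eq1 eq2 B1a abs_divide by (simp only:)
qed

lemma opnorm_arith:
  fixes a c B1 B2 N :: real
  assumes "0 \<le> a" "a \<le> c" "0 < c" "0 \<le> N"
    "\<bar>B1\<bar> \<le> N * a" "\<bar>B2 - B1\<bar> \<le> N * (c - a)"
  shows "\<bar>(B1 / a - B2 / c) * (a / c)\<bar> \<le> 2 * N * ((a / c) * (1 - a / c))"
proof (cases "a = 0")
  case True then show ?thesis by simp
next
  case False
  have eq: "(B1 / a - B2 / c) * (a / c) = (B1 * (c - a) - a * (B2 - B1)) / c^2"
    using False assms by (simp add: field_simps power2_eq_square)
  have "\<bar>B1 * (c - a) - a * (B2 - B1)\<bar> \<le> N * a * (c - a) + a * (N * (c - a))"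
    using assms by (intro order_trans[OF abs_triangle_ineq4] add_mono)
      (auto simp: abs_mult intro: mult_right_mono mult_left_mono)
  then have "\<bar>(B1 * (c - a) - a * (B2 - B1)) / c^2\<bar> \<le> (2 * N * a * (c - a)) / c^2"
    using assms by (simp add: abs_divide divide_right_mono)
  also have "\<dots> = 2 * N * ((a / c) * (1 - a / c))" using assms by (simp add: field_simps power2_eq_square)
  finally show ?thesis using eq by simp
qed

lemma lower_arith:
  fixes x p q1 q2 \<epsilon> :: real
  assumes "0 \<le> x" "x \<le> 1" "0 < \<epsilon>" "\<epsilon> \<le> 1/20"
    "(1-\<epsilon>)*x \<le> p" "p \<le> (1+\<epsilon>)*x" "(1-\<epsilon>)*(1-x) \<le> 1 - p" "1 - p \<le> (1+\<epsilon>)*(1-x)"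
    "q1 \<le> (1+\<epsilon>)*x^2/2" "(1-\<epsilon>)*(1-x^2)/2 \<le> q2"
  shows "min p (1-p) / 8 \<le> p * q2 - (1-p) * q1"
proof -
  have "0 \<le> (1-\<epsilon>)*x" "0 \<le> (1-\<epsilon>)*(1-x)" using assms by simp_all
  then have p0: "0 \<le> p" "0 \<le> 1 - p" using assms by linarith+
  have X: "0 \<le> (1-\<epsilon>)*(1-x^2)/2" using assms by (auto simp: power_le_one)
  have f1: "p * q2 \<ge> p * ((1-\<epsilon>)*(1-x^2)/2)"
    using assms p0 by (intro mult_left_mono) auto
  have f2: "p * ((1-\<epsilon>)*(1-x^2)/2) \<ge> (1-\<epsilon>)*x * ((1-\<epsilon>)*(1-x^2)/2)"
    using assms X by (intro mult_right_mono) auto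
  have f3: "(1-p) * q1 \<le> (1-p) * ((1+\<epsilon>)*x^2/2)"
    using assms p0 by (intro mult_left_mono) auto
  have f4: "(1-p) * ((1+\<epsilon>)*x^2/2) \<le> (1+\<epsilon>)*(1-x) * ((1+\<epsilon>)*x^2/2)"
    using assms by (intro mult_right_mono) auto
  have f5: "(1-\<epsilon>)*x * ((1-\<epsilon>)*(1-x^2)/2) - (1+\<epsilon>)*(1-x) * ((1+\<epsilon>)*x^2/2)
      = x*(1-x)*((1-\<epsilon>)^2 - 4*\<epsilon>*x)/2"
    by (simp add: field_simps power2_eq_square)
  have f6: "x*(1-x)*((1-\<epsilon>)^2 - 4*\<epsilon>*x)/2 \<ge> x*(1-x)*(7/10)/2"
  proof -
    have "(1-\<epsilon>)^2 - 4*\<epsilon>*x \<ge> 7/10"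
    proof -
      have "(1-\<epsilon>)^2 \<ge> (19/20)^2" using assms by (intro power_mono) auto
      moreover have "4*\<epsilon>*x \<le> 4*(1/20)*1" using assms by (intro mult_mono) auto
      ultimately show ?thesis by (simp add: power2_eq_square)
    qed
    then show ?thesis using assms by (intro divide_right_mono mult_left_mono) auto
  qed
  have f7: "min p (1-p) \<le> (1+\<epsilon>) * min x (1-x)" using assms by (auto simp: min_def)
  have f8: "min x (1-x) \<le> 2 * (x * (1-x))"
  proof (cases "x \<le> 1/2")
    case True
    then have "x * 1 \<le> x * (2 * (1 - x))" using assms by (intro mult_left_mono) auto
    then show ?thesis using True by (simp add: min_def algebra_simps)
  next
    case False
    then have "1 * (1 - x) \<le> (2 * x) * (1 - x)" using assms by (intro mult_right_mono) auto
    then show ?thesis using False by (simp add: min_def algebra_simps)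
  qed
  have f9: "(1+\<epsilon>) * min x (1-x) \<le> (21/20) * min x (1-x)" using assms by (intro mult_right_mono) auto
  have S1: "p*q2 - (1-p)*q1 \<ge> x*(1-x)*((1-\<epsilon>)^2 - 4*\<epsilon>*x)/2"
    using f1 f2 f3 f4 f5 by linarith
  have e7: "x*(1-x)*(7/10)/2 = (7/20)*(x*(1-x))" by simp
  have S2: "p*q2 - (1-p)*q1 \<ge> (7/20)*(x*(1-x))" using S1 f6 e7 by linarith
  have g1: "min p (1-p) \<le> (21/20) * min x (1-x)" using f7 f9 by (rule order_trans)
  have g2: "(21/20) * min x (1-x) \<le> (21/20) * (2 * (x * (1-x)))" using f8 by (rule mult_left_mono) simp
  have S3: "min p (1-p) \<le> (21/10) * (x*(1-x))" using order_trans[OF g1 g2] by simp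
  have P0: "0 \<le> x * (1 - x)" using assms by simp
  have aux: "\<And>P D M :: real. (7/20)*P \<le> D \<Longrightarrow> M \<le> (21/10)*P \<Longrightarrow> 0 \<le> P \<Longrightarrow> M/8 \<le> D"
    by linarith
  show ?thesis by (rule aux[OF S2 S3 P0])
qed



definition W :: "(real \<Rightarrow> real) \<Rightarrow> real \<Rightarrow> real" where
  "W \<eta> s = exp (integral {0..s} \<eta>)"
definition AA :: "(real \<Rightarrow> real) \<Rightarrow> real \<Rightarrow> real" where
  "AA \<eta> y = integral {0..y} (\<lambda>s. W \<eta> s)"
definition BB :: "(real \<Rightarrow> real) \<Rightarrow> (real \<Rightarrow> real) \<Rightarrow> real \<Rightarrow> real" where
  "BB \<eta> h y = integral {0..y} (\<lambda>s. integral {0..s} h * W \<eta> s)"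

lemma phi_alt: "phi \<eta> x = AA \<eta> x / AA \<eta> 1"
  by (simp add: phi_def AA_def W_def)

lemma dphi_alt: "dphi \<eta> x h = (BB \<eta> h x / AA \<eta> x - BB \<eta> h 1 / AA \<eta> 1) * (AA \<eta> x / AA \<eta> 1)"
  by (simp add: dphi_def phi_alt AA_def BB_def W_def)

lemma int_sub:
  fixes f :: "real \<Rightarrow> real"
  assumes "continuous_on {0..1} f" "0 \<le> y" "z \<le> 1"
  shows "f integrable_on {y..z}"
  by (rule integrable_continuous_real) (rule continuous_on_subset[OF assms(1)], use assms in auto)

lemma cont_indef:
  fixes f :: "real \<Rightarrow> real"
  assumes "continuous_on {0..1} f"
  shows "continuous_on {0..1} (\<lambda>s. integral {0..s} f)"
  by (rule indefinite_integral_continuous_1) (rule integrable_continuous_real[OF assms])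

lemma cont_W: "continuous_on {0..1} \<eta> \<Longrightarrow> continuous_on {0..1} (\<lambda>s. W \<eta> s)"
  unfolding W_def by (intro continuous_on_exp cont_indef)

lemma c0_bdd:
  fixes h :: "real \<Rightarrow> real"
  assumes "continuous_on {0..1} h"
  shows "bdd_above ((\<lambda>t. \<bar>h t\<bar>) ` {0..1})"
proof -
  have "compact ((\<lambda>t. \<bar>h t\<bar>) ` {0..1::real})"
    by (intro compact_continuous_image continuous_on_rabs assms) auto
  then show ?thesis by (intro bounded_imp_bdd_above compact_imp_bounded)
qed

lemma c0_norm_ge:
  fixes h :: "real \<Rightarrow> real"
  assumes "continuous_on {0..1} h" "t \<in> {0..1}"
  shows "\<bar>h t\<bar> \<le> c0_norm h"
  unfolding c0_norm_def by (rule cSUP_upper[OF assms(2) c0_bdd[OF assms(1)]])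

lemma c0_norm_nonneg:
  fixes h :: "real \<Rightarrow> real"
  assumes "continuous_on {0..1} h"
  shows "0 \<le> c0_norm h"
  using c0_norm_ge[OF assms, of 0] by simp

lemma c0_norm_const: "c0_norm (\<lambda>t. k) = \<bar>k\<bar>"
  unfolding c0_norm_def by simp

lemma gen_bound:
  fixes f g :: "real \<Rightarrow> real"
  assumes "continuous_on {0..1} f" "continuous_on {0..1} g" "0 \<le> y" "z \<le> 1"
    "\<And>s. s \<in> {y..z} \<Longrightarrow> \<bar>f s\<bar> \<le> K * g s"
  shows "\<bar>integral {y..z} f\<bar> \<le> K * integral {y..z} g"
proof -
  have "norm (integral {y..z} f) \<le> integral {y..z} (\<lambda>s. K * g s)"
    by (rule integral_norm_bound_integral)
      (use assms int_sub[OF assms(1)] int_sub[OF continuous_on_mult_left[OF assms(2)]] in auto)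
  then show ?thesis by simp
qed

lemma H_bound:
  fixes h :: "real \<Rightarrow> real"
  assumes "continuous_on {0..1} h" "s \<in> {0..1}"
  shows "\<bar>integral {0..s} h\<bar> \<le> s * c0_norm h"
proof -
  have i1: "h integrable_on {0..s}" using int_sub[OF assms(1), of 0 s] assms by auto
  have i2: "(\<lambda>_. c0_norm h) integrable_on {0..s}" by (rule integrable_const_ivl)
  have b: "norm (h t) \<le> c0_norm h" if "t \<in> {0..s}" for t
    using c0_norm_ge[OF assms(1), of t] that assms(2) by auto
  have "norm (integral {0..s} h) \<le> integral {0..s} (\<lambda>_. c0_norm h)"
    using integral_norm_bound_integral[OF i1 i2 b] by blast
  then show ?thesis using assms by (simp add: content_real)
qed

lemma H_bound1:
  fixes h :: "real \<Rightarrow> real"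
  assumes "continuous_on {0..1} h" "s \<in> {0..1}"
  shows "\<bar>integral {0..s} h\<bar> \<le> c0_norm h"
  by (rule order_trans[OF H_bound[OF assms]])
    (use c0_norm_nonneg[OF assms(1)] assms(2) in \<open>auto intro: mult_left_le_one_le\<close>)

lemma W_pos: "0 < W \<eta> s" by (simp add: W_def)

lemma AA_nonneg:
  assumes "continuous_on {0..1} \<eta>" "y \<in> {0..1}"
  shows "0 \<le> AA \<eta> y"
  unfolding AA_def
  by (rule Henstock_Kurzweil_Integration.integral_nonneg) (use int_sub[OF cont_W[OF assms(1)]] assms W_pos in \<open>auto intro: less_imp_le\<close>)

lemma AA_split:
  assumes "continuous_on {0..1} \<eta>" "y \<in> {0..1}"
  shows "AA \<eta> y + integral {y..1} (\<lambda>s. W \<eta> s) = AA \<eta> 1"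
  unfolding AA_def
  by (rule Henstock_Kurzweil_Integration.integral_combine) (use assms int_sub[OF cont_W[OF assms(1)]] in auto)

lemma AA_le:
  assumes "continuous_on {0..1} \<eta>" "y \<in> {0..1}"
  shows "AA \<eta> y \<le> AA \<eta> 1"
proof -
  have "0 \<le> integral {y..1} (\<lambda>s. W \<eta> s)"
    by (rule Henstock_Kurzweil_Integration.integral_nonneg) (use int_sub[OF cont_W[OF assms(1)]] assms W_pos in \<open>auto intro: less_imp_le\<close>)
  then show ?thesis using AA_split[OF assms] by linarith
qed

lemma AA1_pos:
  assumes "continuous_on {0..1} \<eta>"
  shows "0 < AA \<eta> 1"
proof -
  have i1: "(\<lambda>s. W \<eta> s) integrable_on {0..1}" using int_sub[OF cont_W[OF assms]] by auto
  have i2: "(\<lambda>_. exp (- c0_norm \<eta>)) integrable_on {0..1::real}" by (rule integrable_const_ivl)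
  have b: "exp (- c0_norm \<eta>) \<le> W \<eta> s" if "s \<in> {0..1}" for s
  proof -
    have "\<bar>integral {0..s} \<eta>\<bar> \<le> c0_norm \<eta>" by (rule H_bound1[OF assms that])
    then show ?thesis unfolding W_def by simp
  qed
  have "integral {0..1::real} (\<lambda>_. exp (- c0_norm \<eta>)) \<le> integral {0..1} (\<lambda>s. W \<eta> s)"
    by (rule Henstock_Kurzweil_Integration.integral_le[OF i2 i1]) (rule b)
  moreover have "0 < integral {0..1::real} (\<lambda>_. exp (- c0_norm \<eta>))" by simp
  ultimately show ?thesis unfolding AA_def by linarith
qed



definition R :: "(real \<Rightarrow> real) \<Rightarrow> (real \<Rightarrow> real) \<Rightarrow> real \<Rightarrow> real" where
  "R \<eta> h y = integral {0..y} (\<lambda>s. W \<eta> s * (exp (integral {0..s} h) - 1 - integral {0..s} h))"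

lemma I_add:
  fixes \<eta> h :: "real \<Rightarrow> real"
  assumes "continuous_on {0..1} \<eta>" "continuous_on {0..1} h" "s \<in> {0..1}"
  shows "integral {0..s} (\<lambda>t. \<eta> t + h t) = integral {0..s} \<eta> + integral {0..s} h"
  by (rule Henstock_Kurzweil_Integration.integral_add)
    (use int_sub[OF assms(1)] int_sub[OF assms(2)] assms(3) in auto)

lemma cont_HW:
  assumes "continuous_on {0..1} \<eta>" "continuous_on {0..1} h"
  shows "continuous_on {0..1} (\<lambda>s. integral {0..s} h * W \<eta> s)"
  by (intro continuous_intros cont_indef cont_W assms)

lemma cont_RW:
  assumes "continuous_on {0..1} \<eta>" "continuous_on {0..1} h"
  shows "continuous_on {0..1} (\<lambda>s. W \<eta> s * (exp (integral {0..s} h) - 1 - integral {0..s} h))"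
  by (intro continuous_intros cont_indef cont_W assms)

lemma AA_pert:
  fixes \<eta> h :: "real \<Rightarrow> real"
  assumes "continuous_on {0..1} \<eta>" "continuous_on {0..1} h" "y \<in> {0..1}"
  shows "AA (\<lambda>t. \<eta> t + h t) y = AA \<eta> y + BB \<eta> h y + R \<eta> h y"
proof -
  have "AA (\<lambda>t. \<eta> t + h t) y = integral {0..y} (\<lambda>s. W \<eta> s + (integral {0..s} h * W \<eta> s
            + W \<eta> s * (exp (integral {0..s} h) - 1 - integral {0..s} h)))"
    unfolding AA_def
  proof (rule integral_cong)
    fix s assume "s \<in> {0..y}"
    then have "s \<in> {0..1}" using assms(3) by auto
    then show "W (\<lambda>t. \<eta> t + h t) s = W \<eta> s + (integral {0..s} h * W \<eta> s
            + W \<eta> s * (exp (integral {0..s} h) - 1 - integral {0..s} h))"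
      unfolding W_def using I_add[OF assms(1,2)] by (simp add: exp_add algebra_simps)
  qed
  also have "\<dots> = AA \<eta> y + (BB \<eta> h y + R \<eta> h y)"
    unfolding AA_def BB_def R_def
    using int_sub[OF cont_W[OF assms(1)], of 0 y] int_sub[OF cont_HW[OF assms(1,2)], of 0 y]
      int_sub[OF cont_RW[OF assms(1,2)], of 0 y] assms(3)
    by (simp add: Henstock_Kurzweil_Integration.integral_add integrable_add)
  finally show ?thesis by simp
qed

lemma R_bound:
  fixes \<eta> h :: "real \<Rightarrow> real"
  assumes "continuous_on {0..1} \<eta>" "continuous_on {0..1} h" "y \<in> {0..1}" "c0_norm h \<le> 1"
  shows "\<bar>R \<eta> h y\<bar> \<le> (c0_norm h)^2 * AA \<eta> y"
  unfolding R_def AA_def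
proof (rule gen_bound[OF cont_RW[OF assms(1,2)] cont_W[OF assms(1)]])
  fix s assume "s \<in> {0..y}"
  then have s: "s \<in> {0..1}" using assms(3) by auto
  have H: "\<bar>integral {0..s} h\<bar> \<le> c0_norm h" by (rule H_bound1[OF assms(2) s])
  have "\<bar>exp (integral {0..s} h) - 1 - integral {0..s} h\<bar> \<le> (integral {0..s} h)^2"
    by (rule exp_taylor2) (use H assms(4) in auto)
  also have "\<dots> \<le> (c0_norm h)^2"
    using H by (metis abs_ge_zero power2_abs power_mono)
  finally have "\<bar>W \<eta> s * (exp (integral {0..s} h) - 1 - integral {0..s} h)\<bar> \<le> W \<eta> s * (c0_norm h)^2"
    using W_pos[of \<eta> s] by (simp add: abs_mult)
  then show "\<bar>W \<eta> s * (exp (integral {0..s} h) - 1 - integral {0..s} h)\<bar> \<le> (c0_norm h)^2 * W \<eta> s"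
    by (simp add: mult.commute)
qed (use assms in auto)

lemma BB_bound_gen:
  fixes \<eta> h :: "real \<Rightarrow> real"
  assumes "continuous_on {0..1} \<eta>" "continuous_on {0..1} h" "0 \<le> y" "z \<le> 1"
  shows "\<bar>integral {y..z} (\<lambda>s. integral {0..s} h * W \<eta> s)\<bar> \<le> c0_norm h * integral {y..z} (\<lambda>s. W \<eta> s)"
proof (rule gen_bound[OF cont_HW[OF assms(1,2)] cont_W[OF assms(1)]])
  fix s assume "s \<in> {y..z}"
  then have s: "s \<in> {0..1}" using assms(3,4) by auto
  have H: "\<bar>integral {0..s} h\<bar> \<le> c0_norm h" by (rule H_bound1[OF assms(2) s])
  then show "\<bar>integral {0..s} h * W \<eta> s\<bar> \<le> c0_norm h * W \<eta> s"
    using W_pos[of \<eta> s] by (simp add: abs_mult mult_right_mono)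
qed (use assms in auto)

lemma BB_bound:
  fixes \<eta> h :: "real \<Rightarrow> real"
  assumes "continuous_on {0..1} \<eta>" "continuous_on {0..1} h" "y \<in> {0..1}"
  shows "\<bar>BB \<eta> h y\<bar> \<le> c0_norm h * AA \<eta> y"
  unfolding BB_def AA_def by (rule BB_bound_gen) (use assms in auto)

lemma BB_split:
  fixes \<eta> h :: "real \<Rightarrow> real"
  assumes "continuous_on {0..1} \<eta>" "continuous_on {0..1} h" "y \<in> {0..1}"
  shows "BB \<eta> h y + integral {y..1} (\<lambda>s. integral {0..s} h * W \<eta> s) = BB \<eta> h 1"
  unfolding BB_def
  by (rule Henstock_Kurzweil_Integration.integral_combine) (use assms int_sub[OF cont_HW[OF assms(1,2)]] in auto)

lemma BB_diff_bound:
  fixes \<eta> h :: "real \<Rightarrow> real"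
  assumes "continuous_on {0..1} \<eta>" "continuous_on {0..1} h" "y \<in> {0..1}"
  shows "\<bar>BB \<eta> h 1 - BB \<eta> h y\<bar> \<le> c0_norm h * (AA \<eta> 1 - AA \<eta> y)"
proof -
  have "\<bar>integral {y..1} (\<lambda>s. integral {0..s} h * W \<eta> s)\<bar> \<le> c0_norm h * integral {y..1} (\<lambda>s. W \<eta> s)"
    by (rule BB_bound_gen) (use assms in auto)
  moreover have "AA \<eta> 1 - AA \<eta> y = integral {y..1} (\<lambda>s. W \<eta> s)" using AA_split[OF assms(1,3)] by simp
  moreover have "BB \<eta> h 1 - BB \<eta> h y = integral {y..1} (\<lambda>s. integral {0..s} h * W \<eta> s)"
    using BB_split[OF assms] by simp
  ultimately show ?thesis by simp
qed

lemma BB_add: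
  fixes \<eta> h g :: "real \<Rightarrow> real"
  assumes "continuous_on {0..1} \<eta>" "continuous_on {0..1} h" "continuous_on {0..1} g" "y \<in> {0..1}"
  shows "BB \<eta> (\<lambda>t. h t + g t) y = BB \<eta> h y + BB \<eta> g y"
proof -
  have "BB \<eta> (\<lambda>t. h t + g t) y = integral {0..y} (\<lambda>s. integral {0..s} h * W \<eta> s + integral {0..s} g * W \<eta> s)"
    unfolding BB_def
  proof (rule integral_cong)
    fix s assume "s \<in> {0..y}"
    then have "s \<in> {0..1}" using assms(4) by auto
    then show "integral {0..s} (\<lambda>t. h t + g t) * W \<eta> s = integral {0..s} h * W \<eta> s + integral {0..s} g * W \<eta> s"
      using I_add[OF assms(2,3)] by (simp add: algebra_simps)
  qed
  also have "\<dots> = BB \<eta> h y + BB \<eta> g y"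
    unfolding BB_def
    by (rule Henstock_Kurzweil_Integration.integral_add)
      (use int_sub[OF cont_HW[OF assms(1,2)], of 0 y] int_sub[OF cont_HW[OF assms(1,3)], of 0 y] assms(4) in auto)
  finally show ?thesis .
qed

lemma BB_scale: "BB \<eta> (\<lambda>t. c * h t) y = c * BB \<eta> h y"
  unfolding BB_def by (simp add: mult.assoc)

lemma dphi_bound:
  fixes \<eta> h :: "real \<Rightarrow> real"
  assumes "continuous_on {0..1} \<eta>" "continuous_on {0..1} h" "x \<in> {0..1}"
  shows "\<bar>dphi \<eta> x h\<bar> \<le> 2 * c0_norm h * (phi \<eta> x * (1 - phi \<eta> x))"
  unfolding dphi_alt phi_alt
proof (rule opnorm_arith)
  show "\<bar>BB \<eta> h 1 - BB \<eta> h x\<bar> \<le> c0_norm h * (AA \<eta> 1 - AA \<eta> x)" by (rule BB_diff_bound[OF assms])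
qed (use assms AA_nonneg AA_le AA1_pos c0_norm_nonneg BB_bound in auto)

lemma phi_range:
  assumes "continuous_on {0..1} \<eta>" "x \<in> {0..1}"
  shows "0 \<le> phi \<eta> x" "phi \<eta> x \<le> 1"
  unfolding phi_alt using AA_nonneg[OF assms] AA_le[OF assms] AA1_pos[OF assms(1)]
  by (auto simp: field_simps)

lemma dphi_bound2:
  fixes \<eta> h :: "real \<Rightarrow> real"
  assumes "continuous_on {0..1} \<eta>" "continuous_on {0..1} h" "x \<in> {0..1}"
  shows "\<bar>dphi \<eta> x h\<bar> \<le> 2 * c0_norm h"
proof -
  have q: "phi \<eta> x * (1 - phi \<eta> x) \<le> 1" "0 \<le> phi \<eta> x * (1 - phi \<eta> x)" using phi_range[OF assms(1,3)]
    by (auto intro: mult_le_one)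
  have "2 * c0_norm h * (phi \<eta> x * (1 - phi \<eta> x)) \<le> 2 * c0_norm h"
    using q c0_norm_nonneg[OF assms(2)] by (intro mult_right_le_one_le) auto
  then show ?thesis using dphi_bound[OF assms] by linarith
qed

lemma frechet_part:
  fixes x :: real
  assumes x: "x \<in> {0..1}" and eta: "\<eta> \<in> C0"
  shows "c0_has_derivative (\<lambda>\<eta>'. phi \<eta>' x) (dphi \<eta> x) \<eta>"
  unfolding c0_has_derivative_def
proof (intro conjI allI impI)
  have ce: "continuous_on {0..1} \<eta>" using eta by (simp add: C0_def)
  show "c0_bounded_linear (dphi \<eta> x)"
    unfolding c0_bounded_linear_def
  proof (intro conjI ballI allI exI)
    fix h g assume "h \<in> C0" "g \<in> C0"
    then show "dphi \<eta> x (\<lambda>t. h t + g t) = dphi \<eta> x h + dphi \<eta> x g"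
      unfolding dphi_alt using BB_add[OF ce, of h g] x
      by (simp add: C0_def add_divide_distrib algebra_simps)
  next
    fix h c assume "h \<in> C0"
    show "dphi \<eta> x (\<lambda>t. c * h t) = c * dphi \<eta> x h"
      unfolding dphi_alt BB_scale by (simp add: algebra_simps)
  next
    fix h assume "h \<in> C0"
    then show "\<bar>dphi \<eta> x h\<bar> \<le> 2 * c0_norm h"
      using dphi_bound2[OF ce _ x] by (simp add: C0_def)
  qed
  fix e :: real assume e: "0 < e"
  show "\<exists>d>0. \<forall>h\<in>C0. c0_norm h < d \<longrightarrow>
        \<bar>phi (\<lambda>t. \<eta> t + h t) x - phi \<eta> x - dphi \<eta> x h\<bar> \<le> e * c0_norm h"
  proof (intro exI[of _ "min (1/8) (e/8)"] conjI ballI impI)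
    show "0 < min (1/8) (e/8)" using e by simp
    fix h assume h: "h \<in> C0" and hn: "c0_norm h < min (1/8) (e/8)"
    have ch: "continuous_on {0..1} h" using h by (simp add: C0_def)
    define N where "N = c0_norm h"
    have N0: "0 \<le> N" using c0_norm_nonneg[OF ch] by (simp add: N_def)
    have N1: "N \<le> 1/8" "N \<le> e/8" using hn by (auto simp: N_def)
    have "\<bar>(AA \<eta> x + BB \<eta> h x + R \<eta> h x) / (AA \<eta> 1 + BB \<eta> h 1 + R \<eta> h 1) - AA \<eta> x / AA \<eta> 1
       - (BB \<eta> h x / AA \<eta> x - BB \<eta> h 1 / AA \<eta> 1) * (AA \<eta> x / AA \<eta> 1)\<bar> \<le> 8 * N^2"
      by (rule frechet_arith)
        (use AA_nonneg[OF ce x] AA_le[OF ce x] AA1_pos[OF ce] N0 N1 BB_bound[OF ce ch x] BB_bound[OF ce ch, of 1]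
           R_bound[OF ce ch x] R_bound[OF ce ch, of 1] in \<open>auto simp: N_def\<close>)
    moreover have "8 * N^2 \<le> e * N" using N0 N1 mult_left_mono[of "8*N" e N]
      by (simp add: power2_eq_square algebra_simps)
    ultimately show "\<bar>phi (\<lambda>t. \<eta> t + h t) x - phi \<eta> x - dphi \<eta> x h\<bar> \<le> e * c0_norm h"
      unfolding phi_alt dphi_alt N_def
      using AA_pert[OF ce ch x] AA_pert[OF ce ch, of 1] by simp
  qed
qed



lemma phi_fun: "phi \<eta> = (\<lambda>y. integral {0..y} (\<lambda>s. W \<eta> s) / AA \<eta> 1)"
  by (rule ext) (simp add: phi_alt AA_def)

lemma phi_deriv:
  assumes ce: "continuous_on {0..1} \<eta>" and u: "u \<in> {0..1}"
  shows "(phi \<eta> has_vector_derivative W \<eta> u / AA \<eta> 1) (at u within {0..1})"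
proof -
  have "((\<lambda>y. integral {0..y} (\<lambda>s. W \<eta> s)) has_vector_derivative W \<eta> u) (at u within {0..1})"
    by (rule integral_has_vector_derivative[OF cont_W[OF ce] u])
  then have "((\<lambda>y. integral {0..y} (\<lambda>s. W \<eta> s)) has_real_derivative W \<eta> u) (at u within {0..1})"
    by (simp add: has_real_derivative_iff_has_vector_derivative)
  then have "((\<lambda>y. integral {0..y} (\<lambda>s. W \<eta> s) / AA \<eta> 1) has_real_derivative W \<eta> u / AA \<eta> 1) (at u within {0..1})"
    by (rule DERIV_cdivide)
  then show ?thesis unfolding phi_fun by (simp add: has_real_derivative_iff_has_vector_derivative)
qed

lemma vd1:
  assumes ce: "continuous_on {0..1} \<eta>" and u: "u \<in> {0..1}"
  shows "vector_derivative (phi \<eta>) (at u within {0..1}) = W \<eta> u / AA \<eta> 1"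
  using vector_derivative_within_cbox[of 0 1 u "phi \<eta>" "W \<eta> u / AA \<eta> 1"] phi_deriv[OF ce u] u
  by (simp add: cbox_interval)

lemma W_deriv:
  assumes ce: "continuous_on {0..1} \<eta>" and t: "t \<in> {0..1}"
  shows "((\<lambda>u. W \<eta> u / AA \<eta> 1) has_real_derivative (W \<eta> t * \<eta> t / AA \<eta> 1)) (at t within {0..1})"
proof -
  have "((\<lambda>y. integral {0..y} \<eta>) has_vector_derivative \<eta> t) (at t within {0..1})"
    by (rule integral_has_vector_derivative[OF ce t])
  then have "((\<lambda>y. integral {0..y} \<eta>) has_real_derivative \<eta> t) (at t within {0..1})"
    by (simp add: has_real_derivative_iff_has_vector_derivative)
  then have "((\<lambda>y. exp (integral {0..y} \<eta>)) has_real_derivative exp (integral {0..t} \<eta>) * \<eta> t) (at t within {0..1})"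
    by (rule DERIV_chain2[OF DERIV_exp])
  then have "((\<lambda>y. exp (integral {0..y} \<eta>) / AA \<eta> 1) has_real_derivative exp (integral {0..t} \<eta>) * \<eta> t / AA \<eta> 1) (at t within {0..1})"
    by (rule DERIV_cdivide)
  then show ?thesis by (simp add: W_def)
qed

lemma D2phi_eq:
  assumes ce: "continuous_on {0..1} \<eta>" and t: "t \<in> {0..1}"
  shows "D2phi \<eta> t = W \<eta> t * \<eta> t / AA \<eta> 1"
proof -
  have "((\<lambda>u. W \<eta> u / AA \<eta> 1) has_vector_derivative (W \<eta> t * \<eta> t / AA \<eta> 1)) (at t within {0..1})"
    using W_deriv[OF ce t] by (simp add: has_real_derivative_iff_has_vector_derivative)
  then have "((\<lambda>u. vector_derivative (phi \<eta>) (at u within {0..1})) has_vector_derivative (W \<eta> t * \<eta> t / AA \<eta> 1)) (at t within {0..1})"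
    by (rule has_vector_derivative_transform_within[where d=1]) (use t vd1[OF ce] in auto)
  then show ?thesis
    unfolding D2phi_def
    using vector_derivative_within_cbox[of 0 1 t] t by (simp add: cbox_interval)
qed

lemma D2phi_cont:
  assumes ce: "continuous_on {0..1} \<eta>"
  shows "continuous_on {0..1} (D2phi \<eta>)"
proof -
  have "continuous_on {0..1} (\<lambda>t. W \<eta> t * \<eta> t / AA \<eta> 1)"
    by (intro continuous_intros cont_W ce) (use AA1_pos[OF ce] in auto)
  then show ?thesis using continuous_on_cong[OF refl, of "{0..1}" "D2phi \<eta>" "\<lambda>t. W \<eta> t * \<eta> t / AA \<eta> 1"]
    D2phi_eq[OF ce] by auto
qed

lemma v_lip:
  assumes ce: "continuous_on {0..1} \<eta>" and s: "s \<in> {0..1}" and t: "t \<in> {0..1}"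
  shows "\<bar>W \<eta> t / AA \<eta> 1 - W \<eta> s / AA \<eta> 1\<bar> \<le> c0_norm (D2phi \<eta>)"
proof -
  have "norm (W \<eta> t / AA \<eta> 1 - W \<eta> s / AA \<eta> 1) \<le> c0_norm (D2phi \<eta>) * norm (t - s)"
  proof (rule field_differentiable_bound[where f="\<lambda>u. W \<eta> u / AA \<eta> 1" and f'="D2phi \<eta>" and S="{0..1}"])
    fix z :: real assume z: "z \<in> {0..1}"
    show "((\<lambda>u. W \<eta> u / AA \<eta> 1) has_field_derivative D2phi \<eta> z) (at z within {0..1})"
      using W_deriv[OF ce z] D2phi_eq[OF ce z] by simp
    show "norm (D2phi \<eta> z) \<le> c0_norm (D2phi \<eta>)"
      using c0_norm_ge[OF D2phi_cont[OF ce] z] by simp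
  qed (use s t in auto)
  moreover have "norm (t - s) \<le> 1" using s t by auto
  moreover have "0 \<le> c0_norm (D2phi \<eta>)" by (rule c0_norm_nonneg[OF D2phi_cont[OF ce]])
  ultimately have "c0_norm (D2phi \<eta>) * norm (t - s) \<le> c0_norm (D2phi \<eta>) * 1"
    by (intro mult_left_mono) auto
  with \<open>norm (W \<eta> t / AA \<eta> 1 - W \<eta> s / AA \<eta> 1) \<le> c0_norm (D2phi \<eta>) * norm (t - s)\<close>
  show ?thesis by simp
qed

lemma v_near1:
  assumes ce: "continuous_on {0..1} \<eta>" and t: "t \<in> {0..1}"
  shows "\<bar>W \<eta> t / AA \<eta> 1 - 1\<bar> \<le> c0_norm (D2phi \<eta>)"
proof -
  let ?c = "AA \<eta> 1"
  have c: "0 < ?c" by (rule AA1_pos[OF ce])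
  have i1: "(\<lambda>s. W \<eta> s / ?c) integrable_on {0..1}"
    using int_sub[OF cont_W[OF ce], of 0 1] by (simp add: integrable_on_divide)
  have int1: "integral {0..1} (\<lambda>s. W \<eta> s / ?c) = 1" using c by (simp add: AA_def)
  have "integral {0..1} (\<lambda>s. W \<eta> t / ?c - W \<eta> s / ?c) = W \<eta> t / ?c - integral {0..1} (\<lambda>s. W \<eta> s / ?c)"
    using i1 by (subst Henstock_Kurzweil_Integration.integral_diff) auto
  then have eq: "W \<eta> t / ?c - 1 = integral {0..1} (\<lambda>s. W \<eta> t / ?c - W \<eta> s / ?c)" using int1 by simp
  have "\<bar>integral {0..1} (\<lambda>s. W \<eta> t / ?c - W \<eta> s / ?c)\<bar> \<le> c0_norm (D2phi \<eta>) * integral {0..1} (\<lambda>s::real. 1::real)"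
  proof (rule gen_bound)
    show "continuous_on {0..1} (\<lambda>s. W \<eta> t / ?c - W \<eta> s / ?c)" by (intro continuous_intros cont_W ce) (use c in auto)
    fix s assume "s \<in> {0..1::real}"
    then show "\<bar>W \<eta> t / ?c - W \<eta> s / ?c\<bar> \<le> c0_norm (D2phi \<eta>) * 1" using v_lip[OF ce _ t] by simp
  qed auto
  then show ?thesis using eq by simp
qed

lemma BB_one: "y \<in> {0..1} \<Longrightarrow> BB \<eta> (\<lambda>t. 1) y = integral {0..y} (\<lambda>s. s * W \<eta> s)"
  unfolding BB_def by (rule integral_cong) auto

lemma int_le_sub:
  fixes f g :: "real \<Rightarrow> real"
  assumes "continuous_on {0..1} f" "continuous_on {0..1} g" "0 \<le> y" "z \<le> 1"
    "\<And>s. s \<in> {y..z} \<Longrightarrow> f s \<le> g s"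
  shows "integral {y..z} f \<le> integral {y..z} g"
  by (rule Henstock_Kurzweil_Integration.integral_le) (use assms int_sub[OF assms(1)] int_sub[OF assms(2)] in auto)

lemma dphi_simpl:
  fixes a c B1 B2 :: real
  assumes "0 \<le> a" "0 < c" "\<bar>B1\<bar> \<le> a"
  shows "(B1 / a - B2 / c) * (a / c) = B1 / c - (a / c) * (B2 / c)"
proof (cases "a = 0")
  case True then show ?thesis using assms by simp
next
  case False then show ?thesis using assms by (simp add: field_simps)
qed

lemma lower_part:
  fixes x \<epsilon> :: real
  assumes ce: "continuous_on {0..1} \<eta>" and x: "x \<in> {0..1}"
    and e: "0 < \<epsilon>" "\<epsilon> \<le> 1/20" and small: "c0_norm (D2phi \<eta>) < \<epsilon>"
  shows "min (phi \<eta> x) (1 - phi \<eta> x) / 8 \<le> \<bar>dphi \<eta> x (\<lambda>t. 1)\<bar>"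
proof -
  define c where "c = AA \<eta> 1"
  have c: "0 < c" using AA1_pos[OF ce] by (simp add: c_def)
  define v where "v s = W \<eta> s / c" for s
  have cv: "continuous_on {0..1} v" unfolding v_def by (intro continuous_intros cont_W ce) (use c in auto)
  have csv: "continuous_on {0..1} (\<lambda>s. s * v s)" by (intro continuous_intros cv)
  have vb: "1 - \<epsilon> \<le> v s" "v s \<le> 1 + \<epsilon>" if "s \<in> {0..1}" for s
    using v_near1[OF ce that] small unfolding v_def c_def by auto
  define p where "p = phi \<eta> x"
  define q1 where "q1 = integral {0..x} (\<lambda>s. s * v s)"
  define q2 where "q2 = integral {x..1} (\<lambda>s. s * v s)"
  have x01: "0 \<le> x" "x \<le> 1" using x by auto
  have p_eq: "p = integral {0..x} v" unfolding p_def phi_alt v_def c_def AA_def by simp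
  have p1_eq: "1 - p = integral {x..1} v"
  proof -
    have "AA \<eta> x / c + integral {x..1} (\<lambda>s. W \<eta> s) / c = 1"
      using AA_split[OF ce x] c by (simp add: c_def add_divide_distrib[symmetric])
    then show ?thesis unfolding p_def phi_alt v_def c_def by simp
  qed
  have q_eq: "BB \<eta> (\<lambda>t. 1) 1 / c = q1 + q2"
  proof -
    have "q1 + q2 = integral {0..1} (\<lambda>s. s * v s)" unfolding q1_def q2_def
      by (rule Henstock_Kurzweil_Integration.integral_combine) (use x01 int_sub[OF csv] in auto)
    also have "\<dots> = BB \<eta> (\<lambda>t. 1) 1 / c" using BB_one[of 1 \<eta>] unfolding v_def by simp
    finally show ?thesis by simp
  qed
  have q1_eq: "BB \<eta> (\<lambda>t. 1) x / c = q1"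
    using BB_one[OF x, of \<eta>] unfolding q1_def v_def by simp
  have cn1: "c0_norm (\<lambda>t. 1) = 1" by (simp add: c0_norm_const)
  have B1b: "\<bar>BB \<eta> (\<lambda>t. 1) x\<bar> \<le> AA \<eta> x"
    using BB_bound[OF ce _ x, of "\<lambda>t. 1"] cn1 by simp
  have deq: "dphi \<eta> x (\<lambda>t. 1) = q1 - p * (q1 + q2)"
    unfolding dphi_alt
    by (subst dphi_simpl) (use AA_nonneg[OF ce x] AA1_pos[OF ce] B1b q_eq q1_eq in \<open>auto simp: p_def phi_alt c_def\<close>)
  have h1: "(1-\<epsilon>)*x \<le> p"
  proof -
    have "integral {0..x} (\<lambda>_. 1-\<epsilon>) \<le> integral {0..x} v"
      by (rule int_le_sub) (use cv vb x01 in auto)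
    then show ?thesis using x01 p_eq by (simp add: content_real mult.commute)
  qed
  have h2: "p \<le> (1+\<epsilon>)*x"
  proof -
    have "integral {0..x} v \<le> integral {0..x} (\<lambda>_. 1+\<epsilon>)"
      by (rule int_le_sub) (use cv vb x01 in auto)
    then show ?thesis using x01 p_eq by (simp add: content_real mult.commute)
  qed
  have h3: "(1-\<epsilon>)*(1-x) \<le> 1 - p"
  proof -
    have "integral {x..1} (\<lambda>_. 1-\<epsilon>) \<le> integral {x..1} v"
      by (rule int_le_sub) (use cv vb x01 in auto)
    then show ?thesis using x01 p1_eq by (simp add: content_real mult.commute)
  qed
  have h4: "1 - p \<le> (1+\<epsilon>)*(1-x)"
  proof -
    have "integral {x..1} v \<le> integral {x..1} (\<lambda>_. 1+\<epsilon>)"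
      by (rule int_le_sub) (use cv vb x01 in auto)
    then show ?thesis using x01 p1_eq by (simp add: content_real mult.commute)
  qed
  have h5: "q1 \<le> (1+\<epsilon>)*x^2/2"
  proof -
    have "q1 \<le> integral {0..x} (\<lambda>s. s * (1+\<epsilon>))" unfolding q1_def
      by (rule int_le_sub) (use csv vb x01 e in \<open>auto intro!: mult_left_mono continuous_intros\<close>)
    also have "\<dots> = (1+\<epsilon>)*x^2/2" using x01 by simp
    finally show ?thesis .
  qed
  have h6: "(1-\<epsilon>)*(1-x^2)/2 \<le> q2"
  proof -
    have "integral {x..1} (\<lambda>s. s * (1-\<epsilon>)) \<le> q2" unfolding q2_def
      by (rule int_le_sub) (use csv vb x01 e in \<open>auto intro!: mult_left_mono continuous_intros\<close>)
    moreover have "integral {x..1} (\<lambda>s. s * (1-\<epsilon>)) = (1-\<epsilon>)*(1-x^2)/2"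
    proof -
      have "integral {x..1} (\<lambda>s. s) = (1^2 - x^2)/2" using integral_ident[of x 1] x01 by simp
      then show ?thesis by simp
    qed
    ultimately show ?thesis by linarith
  qed
  have "min p (1-p) / 8 \<le> p * q2 - (1-p) * q1"
    by (rule lower_arith[OF x01 e h1 h2 h3 h4 h5 h6])
  moreover have "p * q2 - (1-p) * q1 = - dphi \<eta> x (\<lambda>t. 1)" unfolding deq by (simp add: algebra_simps)
  ultimately show ?thesis unfolding p_def by simp
qed

lemma opnorm_part:
  fixes x \<epsilon> :: real
  assumes ce: "continuous_on {0..1} \<eta>" and x: "x \<in> {0..1}"
  shows "c0_opnorm (dphi \<eta> x) \<le> 2 * min (phi \<eta> x) (1 - phi \<eta> x)"
    and "\<bar>dphi \<eta> x (\<lambda>t. 1)\<bar> \<le> c0_opnorm (dphi \<eta> x)"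
proof -
  let ?S = "{h\<in>C0. c0_norm h \<le> 1}"
  have z: "(\<lambda>t. 0) \<in> ?S" by (simp add: C0_def c0_norm_const)
  have o: "(\<lambda>t. 1) \<in> ?S" by (simp add: C0_def c0_norm_const)
  have pr: "0 \<le> phi \<eta> x" "phi \<eta> x \<le> 1" using phi_range[OF ce x] by auto
  have pm: "phi \<eta> x * (1 - phi \<eta> x) \<le> min (phi \<eta> x) (1 - phi \<eta> x)"
    using pr by (auto simp: min_def intro: mult_right_le_one_le mult_left_le_one_le)
  have bd: "\<bar>dphi \<eta> x h\<bar> \<le> 2 * min (phi \<eta> x) (1 - phi \<eta> x)" if "h \<in> ?S" for h
  proof -
    have ch: "continuous_on {0..1} h" "c0_norm h \<le> 1" using that by (auto simp: C0_def)
    have q0: "0 \<le> phi \<eta> x * (1 - phi \<eta> x)" using pr by simp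
    have "2 * c0_norm h * (phi \<eta> x * (1 - phi \<eta> x)) \<le> 2 * 1 * (phi \<eta> x * (1 - phi \<eta> x))"
      using ch q0 by (intro mult_right_mono) auto
    then have d1: "\<bar>dphi \<eta> x h\<bar> \<le> 2 * 1 * (phi \<eta> x * (1 - phi \<eta> x))"
      using dphi_bound[OF ce ch(1) x] by (rule order_trans[rotated])
    have m2: "2 * 1 * (phi \<eta> x * (1 - phi \<eta> x)) \<le> 2 * min (phi \<eta> x) (1 - phi \<eta> x)"
      using mult_left_mono[OF pm, of 2] by (simp only: mult_1_right)
    show ?thesis by (rule order_trans[OF d1 m2])
  qed
  show "c0_opnorm (dphi \<eta> x) \<le> 2 * min (phi \<eta> x) (1 - phi \<eta> x)"
    unfolding c0_opnorm_def by (rule cSUP_least) (use z bd in auto)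
  have bdd: "bdd_above ((\<lambda>h. \<bar>dphi \<eta> x h\<bar>) ` ?S)"
    using bd by (intro bdd_aboveI2) auto
  show "\<bar>dphi \<eta> x (\<lambda>t. 1)\<bar> \<le> c0_opnorm (dphi \<eta> x)"
    unfolding c0_opnorm_def by (rule cSUP_upper[OF o bdd])
qed

theorem mainTheorem5:
  fixes x :: real
  assumes "x \<in> {0..1}"
  shows "(\<forall>\<eta>\<in>C0. c0_has_derivative (\<lambda>\<eta>'. phi \<eta>' x) (dphi \<eta> x) \<eta>) \<and>
         (\<exists>\<epsilon>0>0. \<forall>\<epsilon>. 0 < \<epsilon> \<and> \<epsilon> < \<epsilon>0 \<longrightarrow>
            (\<forall>\<eta>\<in>C0. c0_norm (D2phi \<eta>) < \<epsilon> \<longrightarrow>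
               1/8 * min (phi \<eta> x) (1 - phi \<eta> x) \<le> c0_opnorm (dphi \<eta> x) \<and>
               c0_opnorm (dphi \<eta> x) \<le> 2 * min (phi \<eta> x) (1 - phi \<eta> x)))"
proof (intro conjI ballI exI[of _ "1/20"] allI impI)
  fix \<eta> assume "\<eta> \<in> C0"
  then show "c0_has_derivative (\<lambda>\<eta>'. phi \<eta>' x) (dphi \<eta> x) \<eta>" by (rule frechet_part[OF assms])
next
  show "(0::real) < 1/20" by simp
next
  fix \<epsilon> :: real and \<eta> assume e: "0 < \<epsilon> \<and> \<epsilon> < 1/20" and eta: "\<eta> \<in> C0" and sm: "c0_norm (D2phi \<eta>) < \<epsilon>"
  have ce: "continuous_on {0..1} \<eta>" using eta by (simp add: C0_def)
  have "min (phi \<eta> x) (1 - phi \<eta> x) / 8 \<le> \<bar>dphi \<eta> x (\<lambda>t. 1)\<bar>"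
    by (rule lower_part[OF ce assms _ _ sm]) (use e in auto)
  then show "1/8 * min (phi \<eta> x) (1 - phi \<eta> x) \<le> c0_opnorm (dphi \<eta> x)"
    using opnorm_part(2)[OF ce assms] by simp
  show "c0_opnorm (dphi \<eta> x) \<le> 2 * min (phi \<eta> x) (1 - phi \<eta> x)"
    by (rule opnorm_part(1)[OF ce assms])
qed


end
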